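(* Let $G=(V,E)$ be a simple graph and let $a,b$ be positive integers. Let $V_D'\subseteq V$ be such that every $v\in V_D'$ satisfies $$|E(N^a(v))|\ge|E(N^{100ab}(v))|/(2b).$$ Let $W_0=\{u\in V:\operatorname{dist}(u,V_D')\le a\}$. Then the vertex set $S$ of every connected component of $G[W_0]$ satisfies the invariant $\mathcal H$.
   Context: $\operatorname{dist}$ is the shortest-path distance in $G$; $\operatorname{dist}(u,X)=\min_{x\in X}\operatorname{dist}(u,x)$; $N^r(v)=\{u:\operatorname{dist}(u,v)\le r\}$; $E(X)$ is the set of edges with both endpoints in $X$. For a vertex set $X$ (with $V_D'$ and $a$ fixed): - $N_X$ is the maximum size of a subset $X^*\subseteq X\cap V_D'$ such that $\operatorname{dist}(u,v)>2a$ for every pair of distinct $u,v\in X^*$; - $D_X$ is the diameter of the induced subgraph $G[X]$ (equal to $\infty$ if $G[X]$ is disconnected). A vertex set $S$ satisfies invariant $\mathcal H$ if all three of the following hold: 1. for each $u\in V_D'$, either $N^a(u)\subseteq S$ or $N^a(u)\cap S=\emptyset$; 2. $D_S\le 10a\cdot N_S-(4a+1)$; 3. $N_S\le 2b$. *)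

theory Defs
  imports Main "HOL-Library.Extended_Nat"
begin

definition simple_graph :: "'a set \<Rightarrow> ('a \<Rightarrow> 'a \<Rightarrow> bool) \<Rightarrow> bool" where
  "simple_graph V Adj \<longleftrightarrow> finite V \<and> (\<forall>u v. Adj u v \<longrightarrow> u \<in> V \<and> v \<in> V)
     \<and> (\<forall>u v. Adj u v \<longrightarrow> Adj v u) \<and> (\<forall>u. \<not> Adj u u)"

definition walk_in :: "('a \<Rightarrow> 'a \<Rightarrow> bool) \<Rightarrow> 'a set \<Rightarrow> 'a list \<Rightarrow> bool" where
  "walk_in Adj X xs \<longleftrightarrow> xs \<noteq> [] \<and> set xs \<subseteq> X \<and>
     (\<forall>i. Suc i < length xs \<longrightarrow> Adj (xs ! i) (xs ! Suc i))"

text \<open>shortest-path distance in the induced subgraph G[X] (infinity if unreachable)\<close>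
definition dist_in :: "('a \<Rightarrow> 'a \<Rightarrow> bool) \<Rightarrow> 'a set \<Rightarrow> 'a \<Rightarrow> 'a \<Rightarrow> enat" where
  "dist_in Adj X u v = Inf {enat (length xs - 1) | xs. walk_in Adj X xs \<and> hd xs = u \<and> last xs = v}"

definition gdist :: "'a set \<Rightarrow> ('a \<Rightarrow> 'a \<Rightarrow> bool) \<Rightarrow> 'a \<Rightarrow> 'a \<Rightarrow> enat" where
  "gdist V Adj u v = dist_in Adj V u v"

definition gdist_set :: "'a set \<Rightarrow> ('a \<Rightarrow> 'a \<Rightarrow> bool) \<Rightarrow> 'a \<Rightarrow> 'a set \<Rightarrow> enat" where
  "gdist_set V Adj u X = (INF x\<in>X. gdist V Adj u x)"

definition ball_r :: "'a set \<Rightarrow> ('a \<Rightarrow> 'a \<Rightarrow> bool) \<Rightarrow> nat \<Rightarrow> 'a \<Rightarrow> 'a set" where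
  "ball_r V Adj r v = {u \<in> V. gdist V Adj u v \<le> enat r}"

definition edges_in :: "('a \<Rightarrow> 'a \<Rightarrow> bool) \<Rightarrow> 'a set \<Rightarrow> 'a set set" where
  "edges_in Adj X = {{u, v} | u v. u \<in> X \<and> v \<in> X \<and> Adj u v}"

definition NX :: "'a set \<Rightarrow> ('a \<Rightarrow> 'a \<Rightarrow> bool) \<Rightarrow> 'a set \<Rightarrow> nat \<Rightarrow> 'a set \<Rightarrow> nat" where
  "NX V Adj VD a X = Max {card Y | Y. Y \<subseteq> X \<inter> VD \<and>
      (\<forall>u\<in>Y. \<forall>v\<in>Y. u \<noteq> v \<longrightarrow> gdist V Adj u v > enat (2 * a))}"

text \<open>D_X: diameter of G[X] (infinity if disconnected)\<close>
definition DX :: "('a \<Rightarrow> 'a \<Rightarrow> bool) \<Rightarrow> 'a set \<Rightarrow> enat" where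
  "DX Adj X = (SUP p\<in>X \<times> X. dist_in Adj X (fst p) (snd p))"

definition inv_H :: "'a set \<Rightarrow> ('a \<Rightarrow> 'a \<Rightarrow> bool) \<Rightarrow> 'a set \<Rightarrow> nat \<Rightarrow> nat \<Rightarrow> 'a set \<Rightarrow> bool" where
  "inv_H V Adj VD a b S \<longleftrightarrow>
     (\<forall>u\<in>VD. ball_r V Adj a u \<subseteq> S \<or> ball_r V Adj a u \<inter> S = {}) \<and>
     (\<exists>d. DX Adj S = enat d \<and> int d \<le> 10 * int a * int (NX V Adj VD a S) - (4 * int a + 1)) \<and>
     NX V Adj VD a S \<le> 2 * b"

definition components_in :: "('a \<Rightarrow> 'a \<Rightarrow> bool) \<Rightarrow> 'a set \<Rightarrow> 'a set set" where
  "components_in Adj X = {{y \<in> X. dist_in Adj X x y < \<infinity>} | x. x \<in> X}"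

end

theory Submission
  imports Defs
begin


lemma walk_in_succ: "walk_in A X xs \<longleftrightarrow> xs \<noteq> [] \<and> set xs \<subseteq> X \<and> successively A xs"
  unfolding walk_in_def successively_conv_nth by blast

lemma dist_le_iff:
  "dist_in A X u v \<le> enat n \<longleftrightarrow>
     (\<exists>xs. walk_in A X xs \<and> hd xs = u \<and> last xs = v \<and> length xs \<le> Suc n)"
proof
  let ?M = "{enat (length xs - 1) | xs. walk_in A X xs \<and> hd xs = u \<and> last xs = v}"
  assume h: "dist_in A X u v \<le> enat n"
  have "?M \<noteq> {}"
  proof
    assume "?M = {}"
    then have "dist_in A X u v = \<infinity>" unfolding dist_in_def by (simp add: Inf_enat_def)
    with h show False by simp
  qed
  then have "Inf ?M \<in> ?M" unfolding Inf_enat_def by (auto intro: LeastI)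
  then obtain xs where "walk_in A X xs" "hd xs = u" "last xs = v"
     "dist_in A X u v = enat (length xs - 1)" unfolding dist_in_def by auto
  with h show "\<exists>xs. walk_in A X xs \<and> hd xs = u \<and> last xs = v \<and> length xs \<le> Suc n"
    by (intro exI[of _ xs]) auto
next
  assume "\<exists>xs. walk_in A X xs \<and> hd xs = u \<and> last xs = v \<and> length xs \<le> Suc n"
  then obtain xs where "walk_in A X xs" "hd xs = u" "last xs = v" "length xs \<le> Suc n" by blast
  then have "dist_in A X u v \<le> enat (length xs - 1)" unfolding dist_in_def
    by (intro Inf_lower) auto
  also have "\<dots> \<le> enat n" using \<open>length xs \<le> Suc n\<close> by simp
  finally show "dist_in A X u v \<le> enat n" .
qed

lemma dist_fin_iff: "dist_in A X u v < \<infinity> \<longleftrightarrow> (\<exists>n. dist_in A X u v \<le> enat n)"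
  by (metis enat_ord_simps(4) enat_ord_code(3) le_less_trans less_enat_def not_enat_eq order_refl)

lemma walk_concat:
  assumes "walk_in A X xs" "walk_in A X ys" "last xs = hd ys"
  shows "walk_in A X (xs @ tl ys) \<and> hd (xs @ tl ys) = hd xs \<and> last (xs @ tl ys) = last ys
     \<and> length (xs @ tl ys) = length xs + length ys - 1"
proof (cases "tl ys = []")
  case True
  then obtain y where "ys = [y]" using assms(2) unfolding walk_in_def by (cases ys) auto
  then show ?thesis using assms True by auto
next
  case False
  have ys: "ys = hd ys # tl ys" using assms(2) unfolding walk_in_def by auto
  have "successively A ys" "successively A xs" using assms walk_in_succ by auto
  then have "successively A (tl ys)" "A (hd ys) (hd (tl ys))"
    using ys False by (metis successively_Cons)+
  moreover have "set (tl ys) \<subseteq> X" "set xs \<subseteq> X" "xs \<noteq> []" using assms ys walk_in_succ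
    by (metis list.set_sel(2) subsetI subset_iff list.sel(2) set_empty2)+
  moreover have "last (tl ys) = last ys" using ys False by (metis last_ConsR)
  moreover have "length ys \<ge> 1" using ys by (metis One_nat_def Suc_le_eq length_greater_0_conv list.distinct(1))
  ultimately show ?thesis using False assms \<open>successively A xs\<close> ys
    unfolding walk_in_succ
    by (auto simp: successively_append_iff last_append)
qed

lemma dist_trans:
  assumes "dist_in A X u v \<le> enat n" "dist_in A X v w \<le> enat m"
  shows "dist_in A X u w \<le> enat (n + m)"
proof -
  obtain xs where xs: "walk_in A X xs" "hd xs = u" "last xs = v" "length xs \<le> Suc n"
    using assms(1) dist_le_iff by metis
  obtain ys where ys: "walk_in A X ys" "hd ys = v" "last ys = w" "length ys \<le> Suc m"
    using assms(2) dist_le_iff by metis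
  show ?thesis unfolding dist_le_iff
    using walk_concat[OF xs(1) ys(1)] xs ys by (intro exI[of _ "xs @ tl ys"]) auto
qed

lemma dist_sym:
  assumes "\<And>x y. A x y \<Longrightarrow> A y x" "dist_in A X u v \<le> enat n"
  shows "dist_in A X v u \<le> enat n"
proof -
  obtain xs where xs: "walk_in A X xs" "hd xs = u" "last xs = v" "length xs \<le> Suc n"
    using assms(2) dist_le_iff by metis
  have "successively A (rev xs)" using xs(1) assms(1) unfolding walk_in_succ
    by (auto intro: successively_mono)
  then have "walk_in A X (rev xs)" using xs(1) unfolding walk_in_succ by auto
  then show ?thesis unfolding dist_le_iff using xs
    by (intro exI[of _ "rev xs"]) (auto simp: hd_rev last_rev)
qed

lemma dist_refl: "u \<in> X \<Longrightarrow> dist_in A X u u \<le> enat 0"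
  unfolding dist_le_iff walk_in_def by (intro exI[of _ "[u]"]) auto

lemma dist_edge: "u \<in> X \<Longrightarrow> v \<in> X \<Longrightarrow> A u v \<Longrightarrow> dist_in A X u v \<le> enat 1"
  unfolding dist_le_iff walk_in_succ by (intro exI[of _ "[u,v]"]) auto

lemma dist_mono_set: "X \<subseteq> Y \<Longrightarrow> dist_in A X u v \<le> enat n \<Longrightarrow> dist_in A Y u v \<le> enat n"
  unfolding dist_le_iff walk_in_def by blast

lemma dist_mono_n: "dist_in A X u v \<le> enat n \<Longrightarrow> n \<le> m \<Longrightarrow> dist_in A X u v \<le> enat m"
  using order_trans by fastforce

lemma dist_mem: "dist_in A X u v \<le> enat n \<Longrightarrow> u \<in> X \<and> v \<in> X"
  unfolding dist_le_iff walk_in_def by (metis hd_in_set last_in_set subsetD)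

lemma dist_zero: "dist_in A X u v \<le> enat 0 \<Longrightarrow> u = v"
  unfolding dist_le_iff walk_in_def by (metis hd_conv_nth last_conv_nth le_Suc_eq le_zero_eq
      length_0_conv diff_Suc_1 One_nat_def)

lemma walk_prefix:
  assumes "walk_in A X xs" "i < length xs"
  shows "dist_in A X (hd xs) (xs ! i) \<le> enat i"
  unfolding dist_le_iff
proof (intro exI[of _ "take (Suc i) xs"] conjI)
  show "walk_in A X (take (Suc i) xs)" using assms unfolding walk_in_def
    by (auto dest: in_set_takeD)
next
  have "last (take (Suc i) xs) = take (Suc i) xs ! i"
  proof -
    have "min (length xs) (Suc i) = Suc i" using assms by simp
    then show ?thesis using assms by (subst last_conv_nth) auto
  qed
  then show "last (take (Suc i) xs) = xs ! i" by simp
qed (use assms in \<open>auto simp: walk_in_def hd_conv_nth\<close>)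

lemma walk_suffix:
  assumes "walk_in A X xs" "i < length xs"
  shows "dist_in A X (xs ! i) (last xs) \<le> enat (length xs - 1 - i)"
  unfolding dist_le_iff
proof (intro exI[of _ "drop i xs"] conjI)
  show "walk_in A X (drop i xs)" using assms unfolding walk_in_def
    by (auto dest: in_set_dropD)
qed (use assms in \<open>auto simp: walk_in_def hd_drop_conv_nth\<close>)



locale setting =
  fixes V :: "'a set" and Adj :: "'a \<Rightarrow> 'a \<Rightarrow> bool" and VD :: "'a set" and a b :: nat
    and W0 S :: "'a set" and x0 :: 'a
  assumes sg: "simple_graph V Adj"
    and apos: "a > 0" and bpos: "b > 0"
    and VDV: "VD \<subseteq> V"
    and dens: "\<forall>v\<in>VD. real (card (edges_in Adj (ball_r V Adj a v)))
                 \<ge> real (card (edges_in Adj (ball_r V Adj (100 * a * b) v))) / (2 * real b)"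
    and W0_def: "W0 = {u \<in> V. gdist_set V Adj u VD \<le> enat a}"
    and S_def: "S = {y \<in> W0. dist_in Adj W0 x0 y < \<infinity>}"
    and x0W: "x0 \<in> W0"
begin

abbreviation "gd \<equiv> gdist V Adj"

lemma Adj_sym: "Adj x y \<Longrightarrow> Adj y x" using sg unfolding simple_graph_def by blast
lemma Adj_V: "Adj x y \<Longrightarrow> x \<in> V \<and> y \<in> V" using sg unfolding simple_graph_def by blast
lemma finV: "finite V" using sg unfolding simple_graph_def by blast

lemma gd_sym: "gd u v \<le> enat n \<Longrightarrow> gd v u \<le> enat n"
  unfolding gdist_def by (rule dist_sym[of Adj]) (use Adj_sym in auto)
lemma gd_trans: "gd u v \<le> enat n \<Longrightarrow> gd v w \<le> enat m \<Longrightarrow> gd u w \<le> enat (n + m)"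
  unfolding gdist_def by (rule dist_trans)
lemma gd_refl: "u \<in> V \<Longrightarrow> gd u u \<le> enat 0"
  unfolding gdist_def by (rule dist_refl)
lemma gd_mem: "gd u v \<le> enat n \<Longrightarrow> u \<in> V \<and> v \<in> V"
  unfolding gdist_def by (rule dist_mem)
lemma gd_mono: "gd u v \<le> enat n \<Longrightarrow> n \<le> m \<Longrightarrow> gd u v \<le> enat m"
  by (meson enat_ord_simps(1) order_trans)

lemma W0_iff: "u \<in> W0 \<longleftrightarrow> u \<in> V \<and> (\<exists>w\<in>VD. gd u w \<le> enat a)"
proof -
  have "gdist_set V Adj u VD \<le> enat a \<longleftrightarrow> (\<exists>w\<in>VD. gd u w \<le> enat a)"
  proof
    assume h: "gdist_set V Adj u VD \<le> enat a"
    let ?M = "(\<lambda>x. gd u x) ` VD"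
    have "?M \<noteq> {}"
    proof
      assume "?M = {}"
      then have "gdist_set V Adj u VD = \<infinity>" unfolding gdist_set_def by (simp add: Inf_enat_def)
      with h show False by simp
    qed
    then have "Inf ?M \<in> ?M" unfolding Inf_enat_def by (auto intro: LeastI)
    then show "\<exists>w\<in>VD. gd u w \<le> enat a" using h unfolding gdist_set_def by auto
  next
    assume "\<exists>w\<in>VD. gd u w \<le> enat a"
    then show "gdist_set V Adj u VD \<le> enat a" unfolding gdist_set_def
      by (meson INF_lower2)
  qed
  then show ?thesis unfolding W0_def by auto
qed

lemma VD_W0: assumes "w \<in> VD" shows "w \<in> W0"
proof -
  have "w \<in> V" using assms VDV by blast
  then have "gd w w \<le> enat a" using gd_mono[OF gd_refl[OF \<open>w \<in> V\<close>]] by simp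
  then show ?thesis using W0_iff assms \<open>w \<in> V\<close> by blast
qed

lemma SW0: "S \<subseteq> W0" unfolding S_def by auto
lemma x0S: "x0 \<in> S"
proof -
  have "dist_in Adj W0 x0 x0 \<le> enat 0" by (rule dist_refl[OF x0W])
  then show ?thesis unfolding S_def dist_fin_iff using x0W by blast
qed

lemma S_reach: assumes "y \<in> S" "dist_in Adj W0 y z \<le> enat n" shows "z \<in> S"
proof -
  obtain m where m: "dist_in Adj W0 x0 y \<le> enat m" using assms(1) unfolding S_def dist_fin_iff by blast
  have "dist_in Adj W0 x0 z \<le> enat (m + n)" by (rule dist_trans[OF m assms(2)])
  moreover have "z \<in> W0" using dist_mem[OF assms(2)] by blast
  ultimately show ?thesis unfolding S_def dist_fin_iff by blast
qed

lemma S_lift: assumes "y \<in> S" "dist_in Adj W0 y z \<le> enat n"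
  shows "dist_in Adj S y z \<le> enat n"
proof -
  obtain xs where xs: "walk_in Adj W0 xs" "hd xs = y" "last xs = z" "length xs \<le> Suc n"
    using assms(2) dist_le_iff by metis
  have "set xs \<subseteq> S"
  proof
    fix x assume "x \<in> set xs"
    then obtain i where "i < length xs" "x = xs ! i" by (metis in_set_conv_nth)
    then show "x \<in> S" using walk_prefix[OF xs(1)] xs(2) S_reach[OF assms(1)] by metis
  qed
  then have "walk_in Adj S xs" using xs(1) unfolding walk_in_def by auto
  then show ?thesis unfolding dist_le_iff using xs by blast
qed

lemma S_conn: assumes "y \<in> S" "z \<in> S" shows "\<exists>n. dist_in Adj S y z \<le> enat n"
proof -
  obtain n m where "dist_in Adj W0 x0 y \<le> enat n" "dist_in Adj W0 x0 z \<le> enat m"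
    using assms unfolding S_def dist_fin_iff by blast
  then have "dist_in Adj W0 y x0 \<le> enat n" using dist_sym[of Adj] Adj_sym by blast
  then have "dist_in Adj W0 y z \<le> enat (n + m)"
    using dist_trans[OF _ \<open>dist_in Adj W0 x0 z \<le> enat m\<close>] by blast
  then show ?thesis using S_lift assms by blast
qed

lemma B1: assumes "w \<in> VD" "gd w x \<le> enat a" shows "dist_in Adj W0 w x \<le> enat a"
proof -
  obtain xs where xs: "walk_in Adj V xs" "hd xs = w" "last xs = x" "length xs \<le> Suc a"
    using assms(2) dist_le_iff unfolding gdist_def by metis
  have "set xs \<subseteq> W0"
  proof
    fix y assume "y \<in> set xs"
    then obtain i where i: "i < length xs" "y = xs ! i" by (metis in_set_conv_nth)
    have "gd w y \<le> enat i" using walk_prefix[OF xs(1) i(1)] unfolding xs(2) i(2) gdist_def .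
    then have "gd y w \<le> enat i" by (rule gd_sym)
    moreover have "i \<le> a" using i xs(4) by simp
    ultimately have g: "gd y w \<le> enat a" by (rule gd_mono)
    have "y \<in> V" using gd_mem[OF g] by blast
    with g show "y \<in> W0" unfolding W0_iff using assms(1) by blast
  qed
  then have "walk_in Adj W0 xs" using xs(1) unfolding walk_in_def by auto
  then show ?thesis unfolding dist_le_iff using xs by blast
qed

lemma B2: assumes "w1 \<in> VD" "w2 \<in> VD" "gd w1 w2 \<le> enat (2*a+1)"
  shows "dist_in Adj W0 w1 w2 \<le> enat (2*a+1)"
proof -
  obtain xs where xs: "walk_in Adj V xs" "hd xs = w1" "last xs = w2" "length xs \<le> Suc (2*a+1)"
    using assms(3) dist_le_iff unfolding gdist_def by metis
  have "set xs \<subseteq> W0"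
  proof
    fix y assume "y \<in> set xs"
    then obtain i where i: "i < length xs" "y = xs ! i" by (metis in_set_conv_nth)
    show "y \<in> W0"
    proof (cases "i \<le> a")
      case True
      have "gd w1 y \<le> enat i" using walk_prefix[OF xs(1) i(1)] unfolding xs(2) i(2) gdist_def .
      then have "gd y w1 \<le> enat i" by (rule gd_sym)
      then have g: "gd y w1 \<le> enat a" using True by (rule gd_mono)
      have "y \<in> V" using gd_mem[OF g] by blast
      with g show "y \<in> W0" unfolding W0_iff using assms(1) by blast
    next
      case False
      have "gd y w2 \<le> enat (length xs - 1 - i)"
        using walk_suffix[OF xs(1) i(1)] unfolding xs(3) i(2) gdist_def .
      moreover have "length xs - 1 - i \<le> a" using False xs(4) by simp
      ultimately have g: "gd y w2 \<le> enat a" by (rule gd_mono)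
      have "y \<in> V" using gd_mem[OF g] by blast
      with g show "y \<in> W0" unfolding W0_iff using assms(2) by blast
    qed
  qed
  then have "walk_in Adj W0 xs" using xs(1) unfolding walk_in_def by auto
  then show ?thesis unfolding dist_le_iff using xs by blast
qed

lemma near: assumes "x \<in> S"
  shows "\<exists>w\<in>VD. w \<in> S \<and> dist_in Adj S w x \<le> enat a \<and> gd x w \<le> enat a"
proof -
  obtain w where w: "w \<in> VD" "gd x w \<le> enat a" using assms SW0 W0_iff by blast
  have d: "dist_in Adj W0 w x \<le> enat a" using B1[OF w(1)] w(2) gd_sym by blast
  then have "dist_in Adj W0 x w \<le> enat a" by (rule dist_sym[rotated]) (use Adj_sym in auto)
  then have "w \<in> S" using S_reach assms by blast
  then show ?thesis using w S_lift d by blast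
qed

lemma B2S: assumes "w1 \<in> VD" "w2 \<in> VD" "w1 \<in> S" "gd w1 w2 \<le> enat (2*a+1)"
  shows "dist_in Adj S w1 w2 \<le> enat (2*a+1)"
  using B2 S_lift assms by blast

end


context setting
begin

lemma inv1: assumes "u \<in> VD"
  shows "ball_r V Adj a u \<subseteq> S \<or> ball_r V Adj a u \<inter> S = {}"
proof (cases "ball_r V Adj a u \<inter> S = {}")
  case False
  then obtain z where z: "z \<in> S" "gd z u \<le> enat a" unfolding ball_r_def by auto
  have "dist_in Adj W0 u z \<le> enat a" using B1[OF assms] gd_sym[OF z(2)] by blast
  then have "dist_in Adj W0 z u \<le> enat a" by (rule dist_sym[rotated]) (use Adj_sym in auto)
  then have uS: "u \<in> S" using S_reach z(1) by blast
  have "ball_r V Adj a u \<subseteq> S"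
  proof
    fix y assume "y \<in> ball_r V Adj a u"
    then have "gd y u \<le> enat a" unfolding ball_r_def by auto
    then have "dist_in Adj W0 u y \<le> enat a" using B1[OF assms] gd_sym by blast
    then show "y \<in> S" using S_reach uS by blast
  qed
  then show ?thesis by blast
qed simp

definition sep :: "'a set \<Rightarrow> bool" where
  "sep Y \<longleftrightarrow> (\<forall>u\<in>Y. \<forall>v\<in>Y. u \<noteq> v \<longrightarrow> gd u v > enat (2 * a))"

abbreviation "k \<equiv> NX V Adj VD a S"

lemma card_sub_V: "Y \<subseteq> V \<Longrightarrow> card Y \<le> card V"
  using finV card_mono by blast

lemma NX_set_fin: "finite {card Y | Y. Y \<subseteq> S \<inter> VD \<and> sep Y}"
proof -
  have "{card Y | Y. Y \<subseteq> S \<inter> VD \<and> sep Y} \<subseteq> {..card V}"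
    using card_sub_V VDV by auto
  then show ?thesis using finite_subset by blast
qed

lemma NX_eq: "k = Max {card Y | Y. Y \<subseteq> S \<inter> VD \<and> sep Y}"
  unfolding NX_def sep_def by (rule refl)

lemma NX_ge: "Y \<subseteq> S \<inter> VD \<Longrightarrow> sep Y \<Longrightarrow> card Y \<le> k"
  unfolding NX_eq using NX_set_fin by (intro Max_ge) auto

lemma NX_ex: "\<exists>Y. Y \<subseteq> S \<inter> VD \<and> sep Y \<and> card Y = k"
proof -
  have "0 \<in> {card Y | Y. Y \<subseteq> S \<inter> VD \<and> sep Y}"
    by (rule CollectI, rule exI[of _ "{}"]) (simp add: sep_def)
  then have "{card Y | Y. Y \<subseteq> S \<inter> VD \<and> sep Y} \<noteq> {}" by (rule ex_in_conv[THEN iffD1, OF exI])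
  then have "k \<in> {card Y | Y. Y \<subseteq> S \<inter> VD \<and> sep Y}"
    unfolding NX_eq using NX_set_fin by (rule Max_in[rotated])
  then obtain Y where "k = card Y" "Y \<subseteq> S \<inter> VD" "sep Y" by blast
  then show ?thesis by metis
qed

lemma k_pos: "k \<ge> 1"
proof -
  obtain w where "w \<in> VD" "w \<in> S" using near[OF x0S] by blast
  then have "card {w} \<le> k" using NX_ge[of "{w}"] unfolding sep_def by auto
  then show ?thesis by simp
qed

abbreviation "P \<equiv> \<lambda>u v. gd u v \<le> enat (2*a+1)"
abbreviation "T \<equiv> VD \<inter> S"

lemma chain_dist: "walk_in P T us \<Longrightarrow> dist_in Adj S (hd us) (last us) \<le> enat ((length us - 1)*(2*a+1))"
proof (induction us)
  case Nil then show ?case by (simp add: walk_in_def)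
next
  case (Cons u us)
  show ?case
  proof (cases "us = []")
    case True
    then show ?thesis using Cons.prems dist_refl[of u S Adj] by (auto simp: walk_in_def)
  next
    case False
    have w: "walk_in P T us" "P u (hd us)" "u \<in> T" "hd us \<in> T"
      using Cons.prems False unfolding walk_in_succ
      by (auto simp: successively_Cons)
    have "dist_in Adj S u (hd us) \<le> enat (2*a+1)" using B2S w(2-4) by blast
    from dist_trans[OF this Cons.IH[OF w(1)]]
    have "dist_in Adj S u (last us) \<le> enat (2 * a + 1 + (length us - 1) * (2 * a + 1))" .
    moreover have "2 * a + 1 + (length us - 1) * (2 * a + 1) = (length (u#us) - 1)*(2*a+1)"
      using False by (cases us) auto
    ultimately show ?thesis using False by simp
  qed
qed

definition cc :: "'a \<Rightarrow> 'a" where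
  "cc y = (if y \<in> VD then y else SOME u. u \<in> VD \<and> u \<in> S \<and> gd y u \<le> enat a)"

lemma cc_prop: assumes "y \<in> S" shows "cc y \<in> T \<and> gd y (cc y) \<le> enat a"
proof (cases "y \<in> VD")
  case True
  have "y \<in> V" using True VDV by blast
  have "gd y y \<le> enat a" using gd_mono[OF gd_refl[OF \<open>y \<in> V\<close>]] by simp
  then show ?thesis using True assms unfolding cc_def by simp
next
  case False
  have "\<exists>u. u \<in> VD \<and> u \<in> S \<and> gd y u \<le> enat a" using near[OF assms] by blast
  then have "cc y \<in> VD \<and> cc y \<in> S \<and> gd y (cc y) \<le> enat a"
    unfolding cc_def using False someI_ex[OF \<open>\<exists>u. u \<in> VD \<and> u \<in> S \<and> gd y u \<le> enat a\<close>] by simp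
  then show ?thesis by blast
qed

lemma chain_exists: assumes "w \<in> T" "w' \<in> T"
  shows "\<exists>us. walk_in P T us \<and> hd us = w \<and> last us = w'"
proof -
  obtain n where "dist_in Adj S w w' \<le> enat n" using S_conn assms by blast
  then obtain xs where xs: "walk_in Adj S xs" "hd xs = w" "last xs = w'"
    using dist_le_iff by metis
  have ne: "xs \<noteq> []" and sub: "set xs \<subseteq> S" and sc: "successively Adj xs"
    using xs(1) unfolding walk_in_succ by auto
  have "successively P (map cc xs)"
    unfolding successively_map
  proof (rule successively_mono[OF sc])
    fix x y assume h: "x \<in> set xs" "y \<in> set xs" "Adj x y"
    have "x \<in> S" "y \<in> S" using h sub by auto
    have 1: "gd (cc x) x \<le> enat a" using cc_prop[OF \<open>x \<in> S\<close>] gd_sym by blast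
    have 2: "gd x y \<le> enat 1" unfolding gdist_def using Adj_V[OF h(3)] h(3) by (intro dist_edge) auto
    have 3: "gd y (cc y) \<le> enat a" using cc_prop[OF \<open>y \<in> S\<close>] by blast
    have "gd (cc x) (cc y) \<le> enat (a + 1 + a)" using gd_trans[OF gd_trans[OF 1 2] 3] .
    moreover have "a + 1 + a = 2*a+1" by simp
    ultimately show "gd (cc x) (cc y) \<le> enat (2*a+1)" by metis
  qed
  moreover have "set (map cc xs) \<subseteq> T" using sub cc_prop by auto
  moreover have "cc w = w" "cc w' = w'" using assms unfolding cc_def by auto
  ultimately show ?thesis using ne xs unfolding walk_in_succ
    by (intro exI[of _ "map cc xs"]) (auto simp: hd_map last_map)
qed

lemma walk_shortcut:
  assumes "walk_in P T us" "i < j" "j < length us" "P (us ! i) (us ! j)"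
  shows "walk_in P T (take (Suc i) us @ drop j us) \<and> hd (take (Suc i) us @ drop j us) = hd us
    \<and> last (take (Suc i) us @ drop j us) = last us
    \<and> length (take (Suc i) us @ drop j us) = Suc i + length us - j"
proof -
  have sc: "successively P us" and st: "set us \<subseteq> T" using assms(1) unfolding walk_in_succ by auto
  have "successively P (take (Suc i) us)" "successively P (drop j us)"
    using sc successively_append_iff[of P "take (Suc i) us" "drop (Suc i) us"]
      successively_append_iff[of P "take j us" "drop j us"] by auto
  moreover have "last (take (Suc i) us) = us ! i"
  proof -
    have "min (length us) (Suc i) = Suc i" using assms by simp
    then show ?thesis using assms by (subst last_conv_nth) auto
  qed
  moreover have "hd (drop j us) = us ! j" using assms by (simp add: hd_drop_conv_nth)
  moreover have "set (take (Suc i) us @ drop j us) \<subseteq> T" using st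
    by (auto dest: in_set_takeD in_set_dropD)
  moreover have "take (Suc i) us \<noteq> []" "drop j us \<noteq> []" using assms by auto
  ultimately show ?thesis using assms unfolding walk_in_succ
    by (auto simp: successively_append_iff hd_append)
qed

lemma chain_short: assumes "w \<in> T" "w' \<in> T"
  shows "\<exists>us. walk_in P T us \<and> hd us = w \<and> last us = w' \<and> length us \<le> 2 * k"
proof -
  obtain us0 where "walk_in P T us0 \<and> hd us0 = w \<and> last us0 = w'" using chain_exists assms by blast
  then obtain us where us: "walk_in P T us" "hd us = w" "last us = w'"
    and minl: "\<And>vs. walk_in P T vs \<and> hd vs = w \<and> last vs = w' \<Longrightarrow> length us \<le> length vs"
    using ex_has_least_nat[of "\<lambda>vs. walk_in P T vs \<and> hd vs = w \<and> last vs = w'" us0 length] by blast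
  define L where "L = length us"
  have stT: "set us \<subseteq> T" using us(1) unfolding walk_in_def by auto
  have far: "gd (us ! (2*i)) (us ! (2*j)) > enat (2*a)" if ij: "i < j" "2*j < L" for i j
  proof (rule ccontr)
    assume "\<not> ?thesis"
    then have "gd (us ! (2*i)) (us ! (2*j)) \<le> enat (2*a+1)"
      by (meson gd_mono le_add1 not_le_imp_less less_le_not_le)
    from walk_shortcut[OF us(1), of "2*i" "2*j", OF _ _ this]
    have "walk_in P T (take (Suc (2*i)) us @ drop (2*j) us)"
      "hd (take (Suc (2*i)) us @ drop (2*j) us) = w"
      "last (take (Suc (2*i)) us @ drop (2*j) us) = w'"
      "length (take (Suc (2*i)) us @ drop (2*j) us) = Suc (2*i) + L - 2*j"
      using ij us unfolding L_def by auto
    then have "L \<le> Suc (2*i) + L - 2*j" using minl unfolding L_def by metis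
    then show False using ij by linarith
  qed
  define E where "E = (\<lambda>i. us ! (2*i)) ` {..<(L+1) div 2}"
  have idx: "i < (L+1) div 2 \<longleftrightarrow> 2*i < L" for i by auto
  have inj: "inj_on (\<lambda>i. us ! (2*i)) {..<(L+1) div 2}"
  proof (rule inj_onI)
    fix i j assume h: "i \<in> {..<(L+1) div 2}" "j \<in> {..<(L+1) div 2}" "us ! (2*i) = us ! (2*j)"
    show "i = j"
    proof (rule ccontr)
      assume "i \<noteq> j"
      then consider "i < j" | "j < i" by linarith
      then show False
      proof cases
        case 1
        have "us ! (2*i) \<in> V" using stT h idx VDV unfolding L_def by (meson IntD1 nth_mem lessThan_iff subsetD)
        then have "gd (us ! (2*i)) (us ! (2*j)) \<le> enat (2*a)" using h(3) gd_refl gd_mono by (metis zero_le)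
        then show False using far[OF 1] h idx by (meson lessThan_iff not_le)
      next
        case 2
        have "us ! (2*j) \<in> V" using stT h idx VDV unfolding L_def by (meson IntD1 nth_mem lessThan_iff subsetD)
        then have "gd (us ! (2*j)) (us ! (2*i)) \<le> enat (2*a)" using h(3) gd_refl gd_mono by (metis zero_le)
        then show False using far[OF 2] h idx by (meson lessThan_iff not_le)
      qed
    qed
  qed
  have cardE: "card E = (L+1) div 2" unfolding E_def using card_image[OF inj] by simp
  have ET: "E \<subseteq> S \<inter> VD" unfolding E_def using stT idx unfolding L_def by auto
  have "sep E" unfolding sep_def E_def
  proof (intro ballI impI)
    fix x y assume h: "x \<in> (\<lambda>i. us ! (2*i)) ` {..<(L+1) div 2}" "y \<in> (\<lambda>i. us ! (2*i)) ` {..<(L+1) div 2}" "x \<noteq> y"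
    then obtain i j where ij: "x = us ! (2*i)" "y = us ! (2*j)" "2*i < L" "2*j < L" using idx by auto
    then have "i \<noteq> j" using h by auto
    then consider "i < j" | "j < i" by linarith
    then show "gd x y > enat (2*a)"
    proof cases
      case 1 then show ?thesis using far ij by blast
    next
      case 2
      then have "gd y x > enat (2*a)" using far ij by blast
      then show ?thesis using gd_sym by (meson not_le)
    qed
  qed
  then have "(L+1) div 2 \<le> k" using NX_ge ET cardE by metis
  then have "L \<le> 2*k" by linarith
  then show ?thesis using us unfolding L_def by blast
qed

definition BB :: nat where "BB = 2*a + (2*k - 1)*(2*a+1)"

lemma diam_pair: assumes "x \<in> S" "y \<in> S" shows "dist_in Adj S x y \<le> enat BB"
proof -
  obtain w where w: "w \<in> VD" "w \<in> S" "dist_in Adj S w x \<le> enat a" using near[OF assms(1)] by blast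
  obtain w' where w': "w' \<in> VD" "w' \<in> S" "dist_in Adj S w' y \<le> enat a" using near[OF assms(2)] by blast
  have 1: "dist_in Adj S x w \<le> enat a" by (rule dist_sym[rotated, OF w(3)]) (use Adj_sym in auto)
  obtain us where us: "walk_in P T us" "hd us = w" "last us = w'" "length us \<le> 2*k"
    using chain_short w w' by blast
  have "dist_in Adj S w w' \<le> enat ((length us - 1)*(2*a+1))" using chain_dist[OF us(1)] us by simp
  moreover have "(length us - 1)*(2*a+1) \<le> (2*k - 1)*(2*a+1)"
    using us(4) by (intro mult_le_mono1) linarith
  ultimately have 2: "dist_in Adj S w w' \<le> enat ((2*k - 1)*(2*a+1))"
    by (rule dist_mono_n)
  have "dist_in Adj S x y \<le> enat (a + (2*k - 1)*(2*a+1) + a)"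
    using dist_trans[OF dist_trans[OF 1 2] w'(3)] .
  then show ?thesis unfolding BB_def by (rule dist_mono_n) simp
qed

lemma diam: "\<exists>d. DX Adj S = enat d \<and> int d \<le> 10 * int a * int k - (4 * int a + 1)"
proof -
  have "DX Adj S \<le> enat BB" unfolding DX_def
    by (rule SUP_least) (use diam_pair in auto)
  then obtain d where d: "DX Adj S = enat d" "d \<le> BB" using enat_ile by fastforce
  have k1: "k \<ge> 1" by (rule k_pos)
  have a1: "a \<ge> 1" using apos by simp
  have e: "int (2*k-1) = 2 * int k - 1" using k1 by (simp add: of_nat_diff)
  have "int BB = 2*int a + int (2*k-1)*(2*int a+1)" unfolding BB_def by (simp only: of_nat_add of_nat_mult of_nat_1 of_nat_numeral)
  then have "int BB = 2*int a + (2*int k - 1)*(2*int a+1)" unfolding e .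
  moreover have "(int k - 1)*(3*int a - 1) \<ge> 0" using k1 a1 by simp
  ultimately have "int BB \<le> 10 * int a * int k - (4 * int a + 1)"
    using a1 by (simp add: algebra_simps)
  then show ?thesis using d by auto
qed

end


lemma ivt_list:
  fixes f :: "'b \<Rightarrow> nat"
  assumes "xs \<noteq> []" "successively (\<lambda>x y. f y \<le> f x + 1) xs" "f (hd xs) \<le> d" "d \<le> f (last xs)"
  shows "\<exists>x\<in>set xs. f x = d"
  using assms
proof (induction xs)
  case Nil then show ?case by simp
next
  case (Cons x ys)
  show ?case
  proof (cases "ys = []")
    case True then show ?thesis using Cons.prems by simp
  next
    case False
    show ?thesis
    proof (cases "f x = d")
      case True then show ?thesis by simp
    next
      case ne: False
      have s: "successively (\<lambda>x y. f y \<le> f x + 1) ys" "f (hd ys) \<le> f x + 1"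
        using Cons.prems(2) False by (auto simp: successively_Cons)
      have "f (hd ys) \<le> d" using s(2) ne Cons.prems(3) by simp
      moreover have "d \<le> f (last ys)" using Cons.prems(4) False by simp
      ultimately have "\<exists>x\<in>set ys. f x = d" using Cons.IH[OF False s(1)] by blast
      then show ?thesis by simp
    qed
  qed
qed

context setting
begin

abbreviation "mm u \<equiv> card (edges_in Adj (ball_r V Adj a u))"

lemma ball_V: "ball_r V Adj r u \<subseteq> V" unfolding ball_r_def by auto

lemma edges_fin: "finite (edges_in Adj (ball_r V Adj r u))"
proof -
  have "edges_in Adj (ball_r V Adj r u) \<subseteq> Pow V" unfolding edges_in_def ball_r_def by auto
  then show ?thesis using finV by (meson finite_Pow_iff finite_subset)
qed

lemma sep_V: "Y \<subseteq> S \<inter> VD \<Longrightarrow> finite Y"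
  using finV VDV by (meson finite_subset inf.coboundedI2 order_trans)

lemma NX_le: "k \<le> 2 * b"
proof (rule ccontr)
  assume big: "\<not> k \<le> 2 * b"
  obtain Y where Y: "Y \<subseteq> S \<inter> VD" "sep Y" "card Y = k" using NX_ex by blast
  obtain w0 where w0: "w0 \<in> VD" "w0 \<in> S" using near[OF x0S] by blast
  then have "w0 \<in> T" by blast
  then obtain v where v: "v \<in> T" and vmin: "\<And>u. u \<in> T \<Longrightarrow> mm v \<le> mm u"
    using ex_has_least_nat[of "\<lambda>u. u \<in> T" w0 "\<lambda>u. mm u"] by blast
  have vV: "v \<in> V" using v VDV by blast
  have vS: "v \<in> S" using v by blast
  show False
  proof (cases "mm v = 0")
    case True
    have noadj: "\<not> Adj v u" for u
    proof
      assume h: "Adj v u"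
      have "gd v v \<le> enat a" using gd_mono[OF gd_refl[OF vV]] by simp
      then have "v \<in> ball_r V Adj a v" unfolding ball_r_def using vV by simp
      have "gd u v \<le> enat 1" unfolding gdist_def using Adj_V[OF h] Adj_sym[OF h] by (intro dist_edge) auto
      moreover have "1 \<le> a" using apos by simp
      ultimately have "gd u v \<le> enat a" by (rule gd_mono)
      then have "u \<in> ball_r V Adj a v" unfolding ball_r_def using Adj_V[OF h] by simp
      then have "{v, u} \<in> edges_in Adj (ball_r V Adj a v)"
        unfolding edges_in_def using \<open>v \<in> ball_r V Adj a v\<close> h by blast
      then have "edges_in Adj (ball_r V Adj a v) \<noteq> {}" by blast
      then show False using True edges_fin by simp
    qed
    have "Y \<subseteq> {v}"
    proof
      fix y assume "y \<in> Y"
      then have "y \<in> S" using Y by blast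
      obtain n where "dist_in Adj S v y \<le> enat n" using S_conn[OF vS \<open>y \<in> S\<close>] by blast
      then obtain xs where xs: "walk_in Adj S xs" "hd xs = v" "last xs = y" using dist_le_iff by metis
      have "length xs = 1"
      proof (rule ccontr)
        assume "length xs \<noteq> 1"
        then have "Suc 0 < length xs" using xs(1) unfolding walk_in_def by (cases xs) auto
        then have "Adj (xs ! 0) (xs ! Suc 0)" using xs(1) unfolding walk_in_def by blast
        moreover have "xs ! 0 = v" using xs(2) xs(1) unfolding walk_in_def by (simp add: hd_conv_nth)
        ultimately show False using noadj by simp
      qed
      then obtain z where "xs = [z]" by (metis One_nat_def length_0_conv length_Suc_conv)
      then show "y \<in> {v}" using xs by simp
    qed
    then have "card Y \<le> card {v}" by (intro card_mono) simp_all
    then have "card Y \<le> 1" by simp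
    then show False using big Y(3) bpos by linarith
  next
    case False
    then have mpos: "mm v > 0" by simp
    define p where "p = a * b"
    have pa: "p \<ge> a" "p \<ge> b" unfolding p_def using apos bpos by simp_all
    have hb: "100 * a * b = 100 * p" unfolding p_def by (simp add: mult.assoc)
    define R where "R = 100 * p - a"
    have Rge: "R \<ge> a" unfolding R_def using pa(1) by linarith
    have Ra: "R + a = 100 * a * b" unfolding R_def hb using pa(1) by linarith
    define Z where "Z = {z \<in> T. gd z v \<le> enat R}"
    have "{} \<subseteq> Z \<and> sep {}" unfolding sep_def by simp
    then obtain Y' where Y': "Y' \<subseteq> Z" "sep Y'"
      and Ymin: "\<And>Y2. Y2 \<subseteq> Z \<and> sep Y2 \<Longrightarrow> card V - card Y' \<le> card V - card Y2"
      using ex_has_least_nat[of "\<lambda>Y. Y \<subseteq> Z \<and> sep Y" "{}" "\<lambda>Y. card V - card Y"] by metis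
    have ZV: "Z \<subseteq> V" unfolding Z_def using VDV by blast
    have Ymax: "card Y2 \<le> card Y'" if "Y2 \<subseteq> Z" "sep Y2" for Y2
    proof -
      have "Y2 \<subseteq> V" "Y' \<subseteq> V" using that(1) Y'(1) ZV by blast+
      then have "card Y2 \<le> card V" "card Y' \<le> card V" using card_sub_V by blast+
      then show ?thesis using Ymin[of Y2] that by linarith
    qed
    have "Y' \<subseteq> V" using Y'(1) ZV by blast
    then have finY': "finite Y'" using finV by (rule finite_subset)
    show False
    proof (cases "card Y' \<le> 2 * b")
      case False
      define Big where "Big = edges_in Adj (ball_r V Adj (100 * a * b) v)"
      have sub: "edges_in Adj (ball_r V Adj a y) \<subseteq> Big" if "y \<in> Y'" for y
      proof -
        have "gd y v \<le> enat R" using that Y'(1) unfolding Z_def by blast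
        have "ball_r V Adj a y \<subseteq> ball_r V Adj (100 * a * b) v"
        proof
          fix q assume "q \<in> ball_r V Adj a y"
          then have "q \<in> V" "gd q y \<le> enat a" unfolding ball_r_def by auto
          then have "gd q v \<le> enat (a + R)" using gd_trans \<open>gd y v \<le> enat R\<close> by blast
          then show "q \<in> ball_r V Adj (100 * a * b) v" unfolding ball_r_def using Ra \<open>q \<in> V\<close>
            by (simp add: add.commute)
        qed
        then show ?thesis unfolding Big_def edges_in_def by blast
      qed
      have disj: "edges_in Adj (ball_r V Adj a y1) \<inter> edges_in Adj (ball_r V Adj a y2) = {}"
        if "y1 \<in> Y'" "y2 \<in> Y'" "y1 \<noteq> y2" for y1 y2
      proof (rule ccontr)
        assume "\<not> ?thesis"
        then obtain e where e1: "e \<in> edges_in Adj (ball_r V Adj a y1)" and e2: "e \<in> edges_in Adj (ball_r V Adj a y2)" by blast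
        obtain q1 q2 where q: "e = {q1, q2}" "q1 \<in> ball_r V Adj a y1" using e1 unfolding edges_in_def by blast
        obtain r1 r2 where r: "e = {r1, r2}" "r1 \<in> ball_r V Adj a y2" "r2 \<in> ball_r V Adj a y2"
          using e2 unfolding edges_in_def by blast
        have "q1 \<in> {r1, r2}" using q(1) r(1) by (metis insertCI)
        then have "q1 = r1 \<or> q1 = r2" by blast
        then have "q1 \<in> ball_r V Adj a y2" using r(2,3) by blast
        then have g2: "gd q1 y2 \<le> enat a" unfolding ball_r_def by auto
        have "gd q1 y1 \<le> enat a" using q(2) unfolding ball_r_def by auto
        then have "gd y1 q1 \<le> enat a" by (rule gd_sym)
        then have "gd y1 y2 \<le> enat (a + a)" using g2 by (rule gd_trans)
        moreover have "gd y1 y2 > enat (2*a)" using Y'(2) that unfolding sep_def by blast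
        ultimately show False by (simp add: mult_2)
      qed
      have "card (\<Union>y\<in>Y'. edges_in Adj (ball_r V Adj a y)) = (\<Sum>y\<in>Y'. mm y)"
        by (rule card_UN_disjoint[OF finY']) (use edges_fin disj in auto)
      moreover have "card (\<Union>y\<in>Y'. edges_in Adj (ball_r V Adj a y)) \<le> card Big"
        using sub edges_fin unfolding Big_def by (intro card_mono) auto
      moreover have "(\<Sum>y\<in>Y'. mm v) \<le> (\<Sum>y\<in>Y'. mm y)"
        using vmin Y'(1) unfolding Z_def by (intro sum_mono) blast
      ultimately have c1: "card Y' * mm v \<le> card Big" by simp
      have "real (mm v) \<ge> real (card Big) / (2 * real b)"
        using dens v unfolding Big_def by blast
      then have "real (card Big) \<le> 2 * real b * real (mm v)" using bpos
        by (simp add: divide_le_eq mult.commute)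
      then have "real (card Big) \<le> real (2 * b * mm v)" by simp
      then have "card Big \<le> 2 * b * mm v" by (simp only: of_nat_le_iff)
      then have "card Y' * mm v \<le> 2 * b * mm v" using c1 by linarith
      then have "card Y' \<le> 2 * b" using mpos by simp
      then show False using False by simp
    next
      case True
      obtain t where t: "t \<in> Y" "\<not> gd t v \<le> enat R"
      proof (rule ccontr)
        assume "\<not> thesis"
        then have "Y \<subseteq> Z" using that Y(1) unfolding Z_def by blast
        then have "card Y \<le> card Y'" using Ymax Y(2) by blast
        then show False using True big Y(3) by linarith
      qed
      have tS: "t \<in> S" using t Y by blast
      have maxl: "\<exists>y\<in>Y'. gd u y \<le> enat (2*a)" if "u \<in> Z" for u
      proof (cases "u \<in> Y'")
        case True
        have "u \<in> V" using that ZV by blast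
        then show ?thesis using True gd_mono[OF gd_refl] by (metis zero_le)
      next
        case False
        show ?thesis
        proof (rule ccontr)
          assume nn: "\<not> ?thesis"
          have "sep (insert u Y')" unfolding sep_def
          proof (intro ballI impI)
            fix x y assume h: "x \<in> insert u Y'" "y \<in> insert u Y'" "x \<noteq> y"
            show "gd x y > enat (2*a)"
            proof (cases "x = u")
              case True
              then have "y \<in> Y'" using h by auto
              then show ?thesis using nn True by (meson not_le)
            next
              case xu: False
              show ?thesis
              proof (cases "y = u")
                case True
                then have "x \<in> Y'" using h xu by auto
                then have "\<not> gd u x \<le> enat (2*a)" using nn by blast
                then have "\<not> gd x u \<le> enat (2*a)" using gd_sym[of x u] by blast
                then show ?thesis using True by (meson not_le)
              next
                case False
                then show ?thesis using Y'(2) h xu unfolding sep_def by blast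
              qed
            qed
          qed
          moreover have "insert u Y' \<subseteq> Z" using Y'(1) that by blast
          ultimately have "card (insert u Y') \<le> card Y'" using Ymax by blast
          then show False using False finY' by simp
        qed
      qed
      define \<delta> where "\<delta> x = (LEAST n. gd v x \<le> enat n)" for x
      have dS: "gd v x \<le> enat (\<delta> x)" if xS0: "x \<in> S" for x
      proof -
        obtain n where "dist_in Adj S v x \<le> enat n" using S_conn[OF vS xS0] by blast
        then have "gd v x \<le> enat n" unfolding gdist_def using dist_mono_set SW0 W0_def
          by (metis (no_types, lifting) mem_Collect_eq subset_iff)
        then show ?thesis unfolding \<delta>_def by (rule LeastI)
      qed
      have dle: "\<delta> x \<le> n" if "gd v x \<le> enat n" for x n
        unfolding \<delta>_def using that by (rule Least_le)
      obtain n where "dist_in Adj S v t \<le> enat n" using S_conn[OF vS tS] by blast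
      then obtain xs where xs: "walk_in Adj S xs" "hd xs = v" "last xs = t" using dist_le_iff by metis
      have xsS: "set xs \<subseteq> S" and xsne: "xs \<noteq> []" using xs(1) unfolding walk_in_def by auto
      have succ: "successively (\<lambda>x y. \<delta> y \<le> \<delta> x + 1) xs"
      proof (rule successively_mono)
        show "successively Adj xs" using xs(1) unfolding walk_in_succ by blast
      next
        fix x y assume h: "x \<in> set xs" "y \<in> set xs" "Adj x y"
        have "gd x y \<le> enat 1" unfolding gdist_def using Adj_V[OF h(3)] h(3) by (intro dist_edge) auto
        have "x \<in> S" using h(1) xsS by blast
        then have "gd v y \<le> enat (\<delta> x + 1)" using gd_trans[OF dS \<open>gd x y \<le> enat 1\<close>] by blast
        then show "\<delta> y \<le> \<delta> x + 1" by (rule dle)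
      qed
      have dv: "\<delta> v = 0" using dle[of v 0] gd_refl[OF vV] by simp
      have dt: "\<delta> t > R"
      proof (rule ccontr)
        assume "\<not> ?thesis"
        then have "gd v t \<le> enat R" using dS[OF tS] by (meson gd_mono not_le)
        then show False using t(2) gd_sym[of v t] by blast
      qed
      define D where "D = R - a"
      have cover: "{0..D} \<subseteq> (\<Union>y\<in>Y'. {\<delta> y - 3*a .. \<delta> y + 3*a})"
      proof
        fix d assume "d \<in> {0..D}"
        then have dD: "d \<le> D" by simp
        have "\<delta> (hd xs) \<le> d" "d \<le> \<delta> (last xs)" using xs dv dt dD unfolding D_def by auto
        then obtain x where x: "x \<in> set xs" "\<delta> x = d" using ivt_list[OF xsne succ] by blast
        have xS: "x \<in> S" using x xsS by blast
        have gx: "gd v x \<le> enat d" using dS[OF xS] x(2) by simp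
        obtain u where u: "u \<in> VD" "u \<in> S" "gd x u \<le> enat a" using near[OF xS] by blast
        have "gd v u \<le> enat (d + a)" using gd_trans[OF gx u(3)] .
        then have "gd u v \<le> enat (d + a)" by (rule gd_sym)
        moreover have "d + a \<le> R" using dD Rge unfolding D_def by linarith
        ultimately have "gd u v \<le> enat R" by (rule gd_mono)
        then have "u \<in> Z" unfolding Z_def using u by blast
        then obtain y where y: "y \<in> Y'" "gd u y \<le> enat (2*a)" using maxl by blast
        have xy: "gd x y \<le> enat (a + 2*a)" using gd_trans[OF u(3) y(2)] .
        have "gd v y \<le> enat (d + (a + 2*a))" using gd_trans[OF gx xy] .
        then have 1: "\<delta> y \<le> d + 3*a" using dle by simp
        have yS: "y \<in> S" using y(1) Y'(1) unfolding Z_def by blast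
        have "gd v x \<le> enat (\<delta> y + (a + 2*a))" using gd_trans[OF dS[OF yS] gd_sym[OF xy]] .
        then have 2: "d \<le> \<delta> y + 3*a" using dle x(2) by fastforce
        have "\<delta> y - 3*a \<le> d" using 1 by linarith
        then have "d \<in> {\<delta> y - 3*a .. \<delta> y + 3*a}" using 2 by simp
        then show "d \<in> (\<Union>y\<in>Y'. {\<delta> y - 3*a .. \<delta> y + 3*a})" using y(1) by blast
      qed
      have "card {0..D} \<le> card (\<Union>y\<in>Y'. {\<delta> y - 3*a .. \<delta> y + 3*a})"
        using cover finY' by (intro card_mono) auto
      also have "\<dots> \<le> (\<Sum>y\<in>Y'. card {\<delta> y - 3*a .. \<delta> y + 3*a})" using card_UN_le[OF finY'] .
      also have "\<dots> \<le> (\<Sum>y\<in>Y'. 6*a+1)" by (intro sum_mono) simp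
      also have "\<dots> = card Y' * (6*a+1)" by simp
      also have "\<dots> \<le> 2*b*(6*a+1)" using True by (intro mult_le_mono1)
      finally have "D + 1 \<le> 2*b*(6*a+1)" by simp
      moreover have "2*b*(6*a+1) = 12*p + 2*b" unfolding p_def by (simp add: algebra_simps)
      ultimately show False unfolding D_def R_def using pa by linarith
    qed
  qed
qed

end

theorem lemmaB8:
  fixes V :: "'a set" and Adj :: "'a \<Rightarrow> 'a \<Rightarrow> bool" and VD :: "'a set" and a b :: nat
  assumes "simple_graph V Adj"
    and "a > 0" and "b > 0"
    and "VD \<subseteq> V"
    and "\<forall>v\<in>VD. real (card (edges_in Adj (ball_r V Adj a v)))
                 \<ge> real (card (edges_in Adj (ball_r V Adj (100 * a * b) v))) / (2 * real b)"
    and "W0 = {u \<in> V. gdist_set V Adj u VD \<le> enat a}"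
    and "S \<in> components_in Adj W0"
  shows "inv_H V Adj VD a b S"
proof -
  obtain x0 where x0: "x0 \<in> W0" "S = {y \<in> W0. dist_in Adj W0 x0 y < \<infinity>}"
    using assms(7) unfolding components_in_def by blast
  interpret setting V Adj VD a b W0 S x0
    using assms x0 by unfold_locales auto
  show ?thesis unfolding inv_H_def using inv1 diam NX_le by blast
qed

end
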